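(* Let $N\ge1$, let $\mathcal{ZF}_N$ be as in the context, and let $\mathcal B_N$ be the quotient of the free $\Bbbk$-module on symbols $\bar b_0,\dots,\bar b_{N-1}$ by the submodule generated by $\bar b_i-\bar b_{N-1-i}$, $0\le i\le N-1$. Then the assignment $Z^{l,m,k}\mapsto\sum_{j=0}^k\binom kj\bar b_{l+j}$ extends to a well-defined isomorphism of $\Bbbk$-modules $\mathcal{ZF}_N\xrightarrow{\ \sim\ }\mathcal B_N$.
   Context: $\Bbbk$ is a commutative ring. $\mathcal F_N$ is the free $\Bbbk$-module on symbols $F^{l,m,k}$, $l,m,k\ge0$, $l+m+k+1=N$; $\mathcal{ZF}_N:=\mathcal F_N/I$ with $I$ generated by all $F^{l,m,k}-F^{m,l,k}$ and all $F^{l,m+1,k}+F^{l+1,m,k}-F^{l,m,k+1}$; $Z^{l,m,k}$ denotes the image of $F^{l,m,k}$. *)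

theory Defs
  imports Main "HOL-Library.Function_Algebras"
begin

text \<open>Free k-modules on a set of symbols are modelled as functions from symbols to k
  vanishing outside the symbol set; the basis vector of a symbol is delta.\<close>

definition delta :: "'a \<Rightarrow> ('a \<Rightarrow> 'k::comm_ring_1)" where
  "delta a = (\<lambda>x. if x = a then 1 else 0)"

definition fscale :: "'k::comm_ring_1 \<Rightarrow> ('a \<Rightarrow> 'k) \<Rightarrow> ('a \<Rightarrow> 'k)" where
  "fscale c f = (\<lambda>x. c * f x)"

definition gen_submod :: "('a \<Rightarrow> 'k::comm_ring_1) set \<Rightarrow> ('a \<Rightarrow> 'k) set" where
  "gen_submod S = {(\<Sum>a\<in>T. fscale (r a) a) | T r. finite T \<and> T \<subseteq> S}"

definition coset :: "'b::plus \<Rightarrow> 'b set \<Rightarrow> 'b set" where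
  "coset x A = (\<lambda>a. x + a) ` A"

definition idxF :: "nat \<Rightarrow> (nat \<times> nat \<times> nat) set" where
  "idxF N = {(l,m,k). l + m + k + 1 = N}"

definition freeF :: "nat \<Rightarrow> (nat \<times> nat \<times> nat \<Rightarrow> 'k::comm_ring_1) set" where
  "freeF N = {f. \<forall>t. t \<notin> idxF N \<longrightarrow> f t = 0}"

definition freeB :: "nat \<Rightarrow> (nat \<Rightarrow> 'k::comm_ring_1) set" where
  "freeB N = {g. \<forall>i. N \<le> i \<longrightarrow> g i = 0}"

definition relI :: "nat \<Rightarrow> (nat \<times> nat \<times> nat \<Rightarrow> 'k::comm_ring_1) set" where
  "relI N = gen_submod
     ({delta (l,m,k) - delta (m,l,k) | l m k. l + m + k + 1 = N} \<union>
      {delta (l,m+1,k) + delta (l+1,m,k) - delta (l,m,k+1) | l m k. l + (m+1) + k + 1 = N})"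

definition relJ :: "nat \<Rightarrow> (nat \<Rightarrow> 'k::comm_ring_1) set" where
  "relJ N = gen_submod {delta i - delta (N - 1 - i) | i. i \<le> N - 1}"

definition ZF :: "nat \<Rightarrow> (nat \<times> nat \<times> nat \<Rightarrow> 'k::comm_ring_1) set set" where
  "ZF N = (\<lambda>x. coset x (relI N)) ` freeF N"

definition BN :: "nat \<Rightarrow> (nat \<Rightarrow> 'k::comm_ring_1) set set" where
  "BN N = (\<lambda>x. coset x (relJ N)) ` freeB N"

definition phi_gen :: "nat \<times> nat \<times> nat \<Rightarrow> (nat \<Rightarrow> 'k::comm_ring_1)" where
  "phi_gen t = (case t of (l,m,k) \<Rightarrow> (\<Sum>j\<le>k. fscale (of_nat (k choose j)) (delta (l+j))))"

definition phi :: "nat \<Rightarrow> (nat \<times> nat \<times> nat \<Rightarrow> 'k::comm_ring_1) \<Rightarrow> (nat \<Rightarrow> 'k)" where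
  "phi N f = (\<Sum>t\<in>idxF N. fscale (f t) (phi_gen t))"

end

theory Submission
  imports Defs
begin

lemma sum_apply: "(\<Sum>a\<in>A. f a) x = (\<Sum>a\<in>A. f a x)"
  by (induction A rule: infinite_finite_induct) auto

lemma fscale_apply[simp]: "fscale c f x = c * f x" by (simp add: fscale_def)
lemma delta_apply: "delta a x = (if x = a then 1 else 0)" by (simp add: delta_def)

definition submod :: "('a \<Rightarrow> 'k::comm_ring_1) set \<Rightarrow> bool" where
  "submod M \<longleftrightarrow> 0 \<in> M \<and> (\<forall>x\<in>M. \<forall>y\<in>M. x + y \<in> M) \<and> (\<forall>c x. x \<in> M \<longrightarrow> fscale c x \<in> M)"

lemma fscale_sum: "fscale c (\<Sum>a\<in>T. f a) = (\<Sum>a\<in>T. fscale c (f a))"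
  by (rule ext) (simp add: sum_apply sum_distrib_left)

lemma gen_submod_submod: "submod (gen_submod S)"
  unfolding submod_def
proof (intro conjI ballI allI impI)
  show "0 \<in> gen_submod S" unfolding gen_submod_def by (rule CollectI, rule exI[of _ "{}"]) auto
next
  fix x y assume "x \<in> gen_submod S" "y \<in> gen_submod S"
  then obtain T1 r1 T2 r2 where h: "finite T1" "T1 \<subseteq> S" "x = (\<Sum>a\<in>T1. fscale (r1 a) a)"
     "finite T2" "T2 \<subseteq> S" "y = (\<Sum>a\<in>T2. fscale (r2 a) a)" unfolding gen_submod_def by blast
  define r where "r a = (if a \<in> T1 then r1 a else 0) + (if a \<in> T2 then r2 a else 0)" for a
  have "x + y = (\<Sum>a\<in>T1 \<union> T2. fscale (r a) a)"
  proof (rule ext)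
    fix z
    have "(\<Sum>a\<in>T1 \<union> T2. fscale (r a) a) z = (\<Sum>a\<in>T1 \<union> T2. (if a \<in> T1 then r1 a * a z else 0))
       + (\<Sum>a\<in>T1 \<union> T2. (if a \<in> T2 then r2 a * a z else 0))"
      unfolding sum_apply sum.distrib[symmetric]
      by (rule sum.cong) (simp_all add: r_def distrib_right)
    also have "\<dots> = (\<Sum>a\<in>T1. r1 a * a z) + (\<Sum>a\<in>T2. r2 a * a z)"
      using h by (simp add: sum.If_cases Int_absorb1 Int_absorb2)
    finally show "(x + y) z = (\<Sum>a\<in>T1 \<union> T2. fscale (r a) a) z" using h by (simp add: sum_apply)
  qed
  then show "x + y \<in> gen_submod S" unfolding gen_submod_def using h by blast
next
  fix c x assume "x \<in> gen_submod S"
  then obtain T r where h: "finite T" "T \<subseteq> S" "x = (\<Sum>a\<in>T. fscale (r a) a)"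
    unfolding gen_submod_def by blast
  have "fscale c x = (\<Sum>a\<in>T. fscale (c * r a) a)"
    by (rule ext) (simp add: h sum_apply sum_distrib_left mult.assoc)
  then show "fscale c x \<in> gen_submod S" unfolding gen_submod_def using h(1,2)
    by (intro CollectI exI[of _ T] exI[of _ "\<lambda>a. c * r a"]) simp
qed

lemma gen_submod_base: "s \<in> S \<Longrightarrow> s \<in> gen_submod S"
  unfolding gen_submod_def
  by (rule CollectI, rule exI[of _ "{s}"], rule exI[of _ "\<lambda>_. 1"]) (auto simp: fscale_def)

lemma submod_0: "submod M \<Longrightarrow> 0 \<in> M" by (simp add: submod_def)
lemma submod_add: "submod M \<Longrightarrow> x \<in> M \<Longrightarrow> y \<in> M \<Longrightarrow> x + y \<in> M" by (simp add: submod_def)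
lemma submod_scale: "submod M \<Longrightarrow> x \<in> M \<Longrightarrow> fscale c x \<in> M" by (simp add: submod_def)
lemma submod_uminus: "submod M \<Longrightarrow> x \<in> M \<Longrightarrow> - x \<in> M"
proof -
  assume "submod M" "x \<in> M"
  then have "fscale (-1) x \<in> M" by (rule submod_scale)
  moreover have "fscale (-1) x = - x" by (rule ext) simp
  ultimately show ?thesis by simp
qed
lemma submod_diff: "submod M \<Longrightarrow> x \<in> M \<Longrightarrow> y \<in> M \<Longrightarrow> x - y \<in> M"
  using submod_add[of M x "-y"] submod_uminus[of M y] by simp
lemma submod_sum: "submod M \<Longrightarrow> (\<And>a. a \<in> T \<Longrightarrow> f a \<in> M) \<Longrightarrow> (\<Sum>a\<in>T. f a) \<in> M"
  by (induction T rule: infinite_finite_induct) (auto simp: submod_0 submod_add)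

lemma coset_eq:
  assumes "submod M" shows "coset x M = coset y M \<longleftrightarrow> x - y \<in> M"
proof
  assume "coset x M = coset y M"
  then have "x + 0 \<in> coset y M" using submod_0[OF assms] unfolding coset_def by blast
  then obtain a where "a \<in> M" "x = y + a" unfolding coset_def by auto
  then show "x - y \<in> M" by simp
next
  assume d: "x - y \<in> M"
  show "coset x M = coset y M"
  proof
    show "coset x M \<subseteq> coset y M"
    proof
      fix z assume "z \<in> coset x M"
      then obtain a where "a \<in> M" "z = x + a" unfolding coset_def by auto
      moreover have "(x - y) + a \<in> M" using submod_add[OF assms d \<open>a \<in> M\<close>] .
      ultimately show "z \<in> coset y M" unfolding coset_def
        by (intro image_eqI[of _ _ "(x - y) + a"]) (auto simp: algebra_simps)
    qed
  next
    show "coset y M \<subseteq> coset x M"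
    proof
      fix z assume "z \<in> coset y M"
      then obtain a where "a \<in> M" "z = y + a" unfolding coset_def by auto
      moreover have "a - (x - y) \<in> M" using submod_diff[OF assms \<open>a \<in> M\<close> d] .
      ultimately show "z \<in> coset x M" unfolding coset_def
        by (intro image_eqI[of _ _ "a - (x - y)"]) (auto simp: algebra_simps)
    qed
  qed
qed

definition lin :: "'a set \<Rightarrow> ('a \<Rightarrow> ('b \<Rightarrow> 'k::comm_ring_1)) \<Rightarrow> ('a \<Rightarrow> 'k) \<Rightarrow> ('b \<Rightarrow> 'k)" where
  "lin A G f = (\<Sum>t\<in>A. fscale (f t) (G t))"

lemma lin_apply: "lin A G f x = (\<Sum>t\<in>A. f t * G t x)"
  by (simp add: lin_def sum_apply)

lemma lin_add: "lin A G (f + g) = lin A G f + lin A G g"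
  by (rule ext) (simp add: lin_apply distrib_right sum.distrib)
lemma lin_diff: "lin A G (f - g) = lin A G f - lin A G g"
  by (rule ext) (simp add: lin_apply left_diff_distrib sum_subtractf)
lemma lin_scale: "lin A G (fscale c f) = fscale c (lin A G f)"
  by (rule ext) (simp add: lin_apply sum_distrib_left mult.assoc)
lemma lin_sum: "lin A G (\<Sum>b\<in>B. F b) = (\<Sum>b\<in>B. lin A G (F b))"
  by (rule ext) (simp add: lin_apply sum_apply sum_distrib_right sum.swap[of _ A B])
lemma ite_mult: "(if P then 1 else 0) * (a::'k::comm_ring_1) = (if P then a else 0)" by simp

lemma lin_delta: "finite A \<Longrightarrow> lin A G (delta s) = (if s \<in> A then G s else 0)"
  by (rule ext) (simp add: lin_apply delta_apply ite_mult sum.delta)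

lemma lin_gen:
  assumes "\<And>s. s \<in> S \<Longrightarrow> lin A G s \<in> gen_submod S'"
  shows "x \<in> gen_submod S \<Longrightarrow> lin A G x \<in> gen_submod S'"
proof -
  assume "x \<in> gen_submod S"
  then obtain T r where h: "finite T" "T \<subseteq> S" "x = (\<Sum>a\<in>T. fscale (r a) a)"
    unfolding gen_submod_def by blast
  have "lin A G x = (\<Sum>a\<in>T. fscale (r a) (lin A G a))" by (simp add: h lin_sum lin_scale)
  also have "\<dots> \<in> gen_submod S'"
    using h assms by (intro submod_sum gen_submod_submod submod_scale) auto
  finally show ?thesis .
qed



definition Pf :: "nat \<Rightarrow> nat \<Rightarrow> nat \<Rightarrow> 'k::comm_ring_1" where
  "Pf l k x = (if l \<le> x then of_nat (k choose (x - l)) else 0)"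

lemma Q_eq: "(\<Sum>j\<le>k. of_nat (k choose j) * delta (l + j) x) = (Pf l k x :: 'k::comm_ring_1)"
proof -
  have "(\<Sum>j\<le>k. of_nat (k choose j) * delta (l + j) x)
     = (\<Sum>j\<le>k. if j = x - l then (if l \<le> x then of_nat (k choose j) else (0::'k)) else 0)"
    by (rule sum.cong) (auto simp: delta_apply)
  also have "\<dots> = (if x - l \<le> k then (if l \<le> x then of_nat (k choose (x - l)) else 0) else 0)"
    by (simp add: sum.delta)
  also have "\<dots> = Pf l k x" by (auto simp: Pf_def binomial_eq_0)
  finally show ?thesis .
qed

lemma phi_gen_eq: "phi_gen (l, m, k) = Pf l k"
  by (rule ext) (simp add: phi_gen_def sum_apply Q_eq)

lemma Pf_0: "Pf l 0 = delta l"
  by (rule ext) (auto simp: Pf_def delta_apply binomial_eq_0)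

lemma Pf_Suc: "Pf l (Suc k) = Pf l k + Pf (Suc l) k"
proof (rule ext)
  fix x
  show "Pf l (Suc k) x = (Pf l k + Pf (Suc l) k) x"
  proof (cases "x \<le> l")
    case True then show ?thesis by (cases "x = l") (auto simp: Pf_def)
  next
    case False
    then have "x - l = Suc (x - Suc l)" by simp
    then show ?thesis using False by (simp add: Pf_def)
  qed
qed

lemma submod_relI: "submod (relI N)" unfolding relI_def by (rule gen_submod_submod)
lemma submod_relJ: "submod (relJ N)" unfolding relJ_def by (rule gen_submod_submod)

lemma refl_J:
  assumes "l + m + k + 1 = N"
  shows "Pf m k - Pf l k \<in> (relJ N :: (nat \<Rightarrow> 'k::comm_ring_1) set)"
proof -
  define D :: "nat \<Rightarrow> 'k" where
    "D = (\<Sum>j\<le>k. fscale (of_nat (k choose j)) (delta (m + j) - delta (N - 1 - (m + j))))"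
  have "D \<in> relJ N" unfolding D_def
  proof (intro submod_sum submod_relJ submod_scale)
    fix j assume "j \<in> {..k}"
    then show "delta (m + j) - delta (N - 1 - (m + j)) \<in> (relJ N :: (nat \<Rightarrow> 'k) set)"
      unfolding relJ_def using assms by (intro gen_submod_base) auto
  qed
  moreover have "D = Pf m k - Pf l k"
  proof (rule ext)
    fix x
    have "D x = (\<Sum>j\<le>k. of_nat (k choose j) * delta (m + j) x)
       - (\<Sum>j\<le>k. of_nat (k choose j) * delta (l + (k - j)) x)"
      unfolding D_def sum_apply sum_subtractf[symmetric]
      by (rule sum.cong) (use assms in \<open>auto simp: right_diff_distrib\<close>)
    also have "(\<Sum>j\<le>k. of_nat (k choose j) * delta (l + (k - j)) x)
        = (\<Sum>j\<le>k. of_nat (k choose j) * (delta (l + j) x :: 'k))"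
    proof -
      have "(\<Sum>j\<in>{0..k}. of_nat (k choose j) * delta (l + (k - j)) x)
         = (\<Sum>j\<in>{0..k}. of_nat (k choose (k + 0 - j)) * (delta (l + (k - (k + 0 - j))) x :: 'k))"
        by (rule sum.atLeastAtMost_rev)
      also have "\<dots> = (\<Sum>j\<in>{0..k}. of_nat (k choose j) * (delta (l + j) x :: 'k))"
        by (rule sum.cong) (auto simp: binomial_symmetric[symmetric])
      finally show ?thesis by (simp add: atLeast0AtMost)
    qed
    finally show "D x = (Pf m k - Pf l k) x" by (simp add: Q_eq)
  qed
  ultimately show ?thesis by simp
qed



definition psi :: "nat \<Rightarrow> (nat \<Rightarrow> 'k::comm_ring_1) \<Rightarrow> (nat \<times> nat \<times> nat \<Rightarrow> 'k)" where
  "psi N = lin {..<N} (\<lambda>i. delta (i, N - 1 - i, 0))"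

lemma finite_idxF: "finite (idxF N)"
proof -
  have "idxF N \<subseteq> {..<N} \<times> {..<N} \<times> {..<N}" unfolding idxF_def by auto
  then show ?thesis by (rule finite_subset) auto
qed

lemma mem_idxF[simp]: "(l, m, k) \<in> idxF N \<longleftrightarrow> l + m + k + 1 = N"
  by (simp add: idxF_def)

lemma phi_lin: "phi N = lin (idxF N) phi_gen"
  by (rule ext) (simp add: phi_def lin_def)

lemma lin_gen2: "M = gen_submod S \<Longrightarrow> M' = gen_submod S' \<Longrightarrow> x \<in> M \<Longrightarrow>
   (\<And>s. s \<in> S \<Longrightarrow> lin A G s \<in> M') \<Longrightarrow> lin A G x \<in> M'"
  using lin_gen[of S A G S' x] by blast

lemma phi_J:
  assumes "x \<in> relI N" shows "phi N x \<in> (relJ N :: (nat \<Rightarrow> 'k::comm_ring_1) set)"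
  unfolding phi_lin
proof (rule lin_gen2[OF relI_def relJ_def assms])
  fix s :: "nat \<times> nat \<times> nat \<Rightarrow> 'k"
  assume "s \<in> {delta (l,m,k) - delta (m,l,k) | l m k. l + m + k + 1 = N} \<union>
      {delta (l,m+1,k) + delta (l+1,m,k) - delta (l,m,k+1) | l m k. l + (m+1) + k + 1 = N}"
  then show "lin (idxF N) phi_gen s \<in> relJ N"
  proof
    assume "s \<in> {delta (l,m,k) - delta (m,l,k) | l m k. l + m + k + 1 = N}"
    then obtain l m k where h: "l + m + k + 1 = N" "s = delta (l,m,k) - delta (m,l,k)" by blast
    have "lin (idxF N) phi_gen s = - (Pf m k - Pf l k)"
      using h by (simp add: lin_diff lin_delta finite_idxF phi_gen_eq)
    also have "\<dots> \<in> relJ N"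
      using h by (intro submod_uminus submod_relJ refl_J) simp
    finally show ?thesis .
  next
    assume "s \<in> {delta (l,m+1,k) + delta (l+1,m,k) - delta (l,m,k+1) | l m k. l + (m+1) + k + 1 = N}"
    then obtain l m k where h: "l + (m+1) + k + 1 = N"
      "s = delta (l,m+1,k) + delta (l+1,m,k) - delta (l,m,k+1)" by blast
    have "lin (idxF N) phi_gen s = 0"
      using h by (simp add: lin_diff lin_add lin_delta finite_idxF phi_gen_eq Pf_Suc)
    then show ?thesis using submod_0[OF submod_relJ] by simp
  qed
qed

lemma psi_I:
  assumes "1 \<le> N" "g \<in> relJ N" shows "psi N g \<in> (relI N :: (nat \<times> nat \<times> nat \<Rightarrow> 'k::comm_ring_1) set)"
  unfolding psi_def
proof (rule lin_gen2[OF relJ_def relI_def assms(2)])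
  fix s :: "nat \<Rightarrow> 'k"
  assume "s \<in> {delta i - delta (N - 1 - i) |i. i \<le> N - 1}"
  then obtain i where h: "i \<le> N - 1" "s = delta i - delta (N - 1 - i)" by blast
  have "i < N" "N - 1 - i < N" using h(1) assms(1) by auto
  have "lin {..<N} (\<lambda>i. delta (i, N - 1 - i, 0)) s = delta (i, N - 1 - i, 0) - delta (N - 1 - i, i, 0)"
    using h assms(1) \<open>i < N\<close> \<open>N - 1 - i < N\<close> by (simp add: lin_diff lin_delta)
  also have "\<dots> \<in> relI N" unfolding relI_def
    using h assms(1) by (intro gen_submod_base UnI1 CollectI exI[of _ i] exI[of _ "N - 1 - i"] exI[of _ 0]) auto
  finally show "lin {..<N} (\<lambda>i. delta (i, N - 1 - i, 0)) s \<in> relI N" .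
qed

lemma phi_psi:
  assumes "1 \<le> N" "g \<in> freeB N" shows "phi N (psi N g) = (g :: nat \<Rightarrow> 'k::comm_ring_1)"
proof -
  have "phi N (psi N g) = (\<Sum>i<N. fscale (g i) (delta i))"
    unfolding psi_def lin_def[of "{..<N}"] phi_lin lin_sum
    by (rule sum.cong) (auto simp: lin_scale lin_delta finite_idxF phi_gen_eq Pf_0)
  also have "\<dots> = g"
  proof (rule ext)
    fix x
    show "(\<Sum>i<N. fscale (g i) (delta i)) x = g x"
      using assms(2) by (simp add: sum_apply delta_apply ite_mult freeB_def mult.commute[of "g _"] sum.delta' cong: if_cong)
  qed
  finally show ?thesis .
qed

lemma psi_Pf:
  assumes "1 \<le> N" "l + m + k + 1 = N"
  shows "psi N (Pf l k) - delta (l, m, k) \<in> (relI N :: (nat \<times> nat \<times> nat \<Rightarrow> 'k::comm_ring_1) set)"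
  using assms(2)
proof (induction k arbitrary: l m)
  case 0
  then have "m = N - 1 - l" by simp
  with 0 have "psi N (Pf l 0) = (delta (l, m, 0) :: nat \<times> nat \<times> nat \<Rightarrow> 'k)"
    by (simp add: Pf_0 psi_def lin_delta)
  then show ?case using submod_0[OF submod_relI] by (simp only: diff_self)
next
  case (Suc k)
  have a: "psi N (Pf l k) - delta (l, m+1, k) \<in> (relI N :: (nat \<times> nat \<times> nat \<Rightarrow> 'k) set)"
    by (rule Suc.IH) (use Suc.prems in simp)
  have b: "psi N (Pf (Suc l) k) - delta (Suc l, m, k) \<in> (relI N :: (nat \<times> nat \<times> nat \<Rightarrow> 'k) set)"
    by (rule Suc.IH) (use Suc.prems in simp)
  have c: "delta (l,m+1,k) + delta (l+1,m,k) - delta (l,m,k+1) \<in> (relI N :: (nat \<times> nat \<times> nat \<Rightarrow> 'k) set)"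
    unfolding relI_def using Suc.prems
    by (intro gen_submod_base UnI2 CollectI exI[of _ l] exI[of _ m] exI[of _ k]) auto
  have "psi N (Pf l (Suc k)) - delta (l, m, Suc k) =
     (psi N (Pf l k) - delta (l, m+1, k)) + (psi N (Pf (Suc l) k) - delta (Suc l, m, k))
      + (delta (l,m+1,k) + delta (l+1,m,k) - (delta (l,m,k+1) :: nat \<times> nat \<times> nat \<Rightarrow> 'k))"
    by (simp add: Pf_Suc psi_def lin_add)
  also have "\<dots> \<in> relI N" using a b c by (intro submod_add submod_relI)
  finally show ?case .
qed

lemma fscale_diff: "fscale c a - fscale c b = fscale c (a - b)"
  by (rule ext) (simp add: right_diff_distrib)

lemma psi_phi:
  assumes "1 \<le> N" "x \<in> freeF N"
  shows "psi N (phi N x) - x \<in> (relI N :: (nat \<times> nat \<times> nat \<Rightarrow> 'k::comm_ring_1) set)"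
proof -
  have fx: "\<And>t. t \<notin> idxF N \<Longrightarrow> x t = 0" using assms(2) unfolding freeF_def by blast
  have xe: "x = (\<Sum>t\<in>idxF N. fscale (x t) (delta t))"
  proof (rule ext)
    fix y
    show "x y = (\<Sum>t\<in>idxF N. fscale (x t) (delta t)) y"
      using fx by (auto simp: sum_apply delta_apply finite_idxF mult.commute[of "x _"] ite_mult sum.delta sum.delta' cong: if_cong)
  qed
  have "psi N (phi N x) = (\<Sum>t\<in>idxF N. fscale (x t) (psi N (phi_gen t)))"
    by (simp add: phi_def psi_def lin_sum lin_scale)
  then have "psi N (phi N x) - x = (\<Sum>t\<in>idxF N. fscale (x t) (psi N (phi_gen t) - delta t))"
    by (subst xe) (simp add: sum_subtractf[symmetric] fscale_diff)
  also have "\<dots> \<in> relI N"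
  proof (intro submod_sum submod_scale submod_relI)
    fix t assume "t \<in> idxF N"
    then obtain l m k where "t = (l, m, k)" "l + m + k + 1 = N" unfolding idxF_def by auto
    then show "psi N (phi_gen t) - delta t \<in> (relI N :: (nat \<times> nat \<times> nat \<Rightarrow> 'k) set)"
      using psi_Pf[OF assms(1)] by (simp add: phi_gen_eq)
  qed
  finally show ?thesis .
qed



lemma phi_freeB: "phi N x \<in> (freeB N :: (nat \<Rightarrow> 'k::comm_ring_1) set)"
  unfolding freeB_def
proof (intro CollectI allI impI)
  fix i assume "N \<le> i"
  have "phi N x i = (\<Sum>t\<in>idxF N. x t * phi_gen t i)" by (simp add: phi_def sum_apply)
  also have "\<dots> = (\<Sum>t\<in>idxF N. (0::'k))"
  proof (rule sum.cong)
    fix t assume "t \<in> idxF N"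
    then obtain l m k where "t = (l, m, k)" "l + m + k + 1 = N" unfolding idxF_def by auto
    then show "x t * phi_gen t i = 0" using \<open>N \<le> i\<close>
      by (simp add: phi_gen_eq Pf_def binomial_eq_0)
  qed simp
  finally show "phi N x i = 0" by simp
qed

lemma psi_freeF: "1 \<le> N \<Longrightarrow> psi N g \<in> (freeF N :: (nat \<times> nat \<times> nat \<Rightarrow> 'k::comm_ring_1) set)"
  unfolding freeF_def
proof (intro CollectI allI impI)
  fix t assume "1 \<le> N" "t \<notin> idxF N"
  then have "\<And>i. i < N \<Longrightarrow> t \<noteq> (i, N - 1 - i, 0)" by auto
  then show "psi N g t = 0" by (simp add: psi_def lin_apply delta_apply)
qed

lemma freeF_diff: "x \<in> freeF N \<Longrightarrow> y \<in> freeF N \<Longrightarrow> x - y \<in> freeF N"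
  unfolding freeF_def by auto

theorem mainTheorem4:
  fixes N :: nat
  assumes "1 \<le> N"
  shows "\<exists>\<Phi>. (\<forall>x\<in>freeF N. \<Phi> (coset x (relI N)) = coset (phi N x) (relJ N))
            \<and> bij_betw \<Phi> (ZF N :: (nat \<times> nat \<times> nat \<Rightarrow> 'k::comm_ring_1) set set) (BN N)"
proof -
  define \<Phi> where "\<Phi> C = coset (phi N (SOME x. x \<in> freeF N \<and> C = coset x (relI N))) (relJ N)"
    for C :: "(nat \<times> nat \<times> nat \<Rightarrow> 'k) set"
  have key: "\<Phi> (coset x (relI N)) = coset (phi N x) (relJ N)" if x: "x \<in> freeF N" for x
  proof -
    let ?y = "SOME y. y \<in> freeF N \<and> coset x (relI N) = coset y (relI N)"
    have "?y \<in> freeF N \<and> coset x (relI N) = coset ?y (relI N)"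
      by (rule someI[of _ x]) (simp add: x)
    then have "x - ?y \<in> relI N" using coset_eq[OF submod_relI] by blast
    then have "phi N (x - ?y) \<in> relJ N" by (rule phi_J)
    then have "phi N x - phi N ?y \<in> relJ N" by (simp add: phi_lin lin_diff)
    then show ?thesis unfolding \<Phi>_def using coset_eq[OF submod_relJ] by blast
  qed
  have inj: "inj_on \<Phi> (ZF N)"
  proof (rule inj_onI)
    fix C1 C2 assume "C1 \<in> ZF N" "C2 \<in> ZF N" and eq: "\<Phi> C1 = \<Phi> C2"
    then obtain x y where xy: "x \<in> freeF N" "y \<in> freeF N" "C1 = coset x (relI N)" "C2 = coset y (relI N)"
      unfolding ZF_def by auto
    then have "coset (phi N x) (relJ N) = coset (phi N y) (relJ N)" using eq key by simp
    then have "phi N x - phi N y \<in> relJ N" using coset_eq[OF submod_relJ] by blast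
    then have "phi N (x - y) \<in> relJ N" by (simp add: phi_lin lin_diff)
    then have a: "psi N (phi N (x - y)) \<in> relI N" by (rule psi_I[OF assms])
    have b: "psi N (phi N (x - y)) - (x - y) \<in> relI N"
      by (rule psi_phi[OF assms freeF_diff[OF xy(1,2)]])
    have "psi N (phi N (x - y)) - (psi N (phi N (x - y)) - (x - y)) \<in> relI N"
      using a b by (rule submod_diff[OF submod_relI])
    then have "x - y \<in> relI N" by simp
    then show "C1 = C2" using xy coset_eq[OF submod_relI] by blast
  qed
  have img: "\<Phi> ` ZF N = (BN N :: (nat \<Rightarrow> 'k) set set)"
  proof
    show "\<Phi> ` ZF N \<subseteq> (BN N :: (nat \<Rightarrow> 'k) set set)"
      unfolding ZF_def BN_def using key phi_freeB by fastforce
  next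
    show "(BN N :: (nat \<Rightarrow> 'k) set set) \<subseteq> \<Phi> ` ZF N"
    proof
      fix B :: "(nat \<Rightarrow> 'k) set" assume "B \<in> BN N"
      then obtain g :: "nat \<Rightarrow> 'k" where g: "g \<in> freeB N" "B = coset g (relJ N)" unfolding BN_def by auto
      have "\<Phi> (coset (psi N g) (relI N)) = B"
        using key[OF psi_freeF[OF assms]] phi_psi[OF assms g(1)] g(2) by simp
      moreover have "coset (psi N g) (relI N) \<in> ZF N"
        unfolding ZF_def using psi_freeF[OF assms] by blast
      ultimately show "B \<in> \<Phi> ` ZF N" by blast
    qed
  qed
  show ?thesis
    by (rule exI[of _ \<Phi>]) (use key inj img in \<open>auto simp: bij_betw_def\<close>)
qed


end
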